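(* Let $K\subset\mathbb{C}$ be a subfield. Let $\mathcal{A}=\{H_1,\dots,H_n\}$ be an arrangement of distinct lines in $\mathbb{P}^2_{\mathbb{C}}$ with $|H_n\cap\operatorname{mult}(\mathcal{A})|\le 2$, and let $\mathcal{A}'=\{H_1,\dots,H_{n-1}\}$, $I=I(\mathcal{A})$, $I'=I(\mathcal{A}')$. If the set $\mathcal{R}(I')(K)$ of $K$-valued points is Zariski dense in $\mathcal{R}(I')(\mathbb{C})$, then $\mathcal{R}(I)(K)$ is Zariski dense in $\mathcal{R}(I)(\mathbb{C})$; in particular $\mathcal{R}(I)(K)\ne\emptyset$, i.e. $I$ is realizable over $K$. Moreover, for every inductively connected arrangement $\mathcal{A}$, the incidence $I(\mathcal{A})$ is realizable over $\mathbb{Q}$.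
   Context: Lines $H_i=\{a_ix+b_iy+c_iz=0\}$ are identified with points $(a_i:b_i:c_i)\in(\mathbb{P}^2)^*$; $\det(H_i,H_j,H_k)$ is the determinant of their coefficient rows. $I(\mathcal{A})=\{\{i,j,k\}: H_i\cap H_j\cap H_k\ne\emptyset\}$. $\mathcal{R}(I)=\{(H_1,\dots,H_n)\in((\mathbb{P}^2)^* )^n: H_i\ne H_j\ (i\ne j),\ \det(H_i,H_j,H_k)=0 \text{ iff } \{i,j,k\}\in I\}$; $\mathcal{R}(I)(K)$ denotes its points all of whose lines have coordinates in $K$; $I$ is realizable over $K$ if $\mathcal{R}(I)(K)\neq\emptyset$ (equivalently, some arrangement with defining linear forms over $K$ has incidence $I$). $\operatorname{mult}(\mathcal{A})$ is the set of points on at least three lines of $\mathcal{A}$. $\mathcal{A}$ is inductively connected (i.c.) if its lines can be numbered $H_1,\dots,H_n$ so that $|H_t\cap\operatorname{mult}(\{H_1,\dots,H_t\})|\le 2$ for all $t$. *)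

theory Defs
  imports "HOL-Analysis.Analysis"
begin

text \<open>A line a x + b y + c z = 0 of the complex projective plane is represented by
  a nonzero coefficient vector (a,b,c) in complex^3 (a representative of the point
  (a:b:c) of the dual plane).  An arrangement of n lines is a map H :: nat => complex^3,
  of which only the values H 0, ..., H (n-1) matter.\<close>

type_synonym cvec = "complex ^ 3"

definition linform :: "cvec \<Rightarrow> cvec \<Rightarrow> complex" where
  "linform a p = (\<Sum>j\<in>UNIV. a $ j * p $ j)"

definition projpt :: "cvec \<Rightarrow> cvec set" where
  "projpt p = range (\<lambda>c::complex. c *s p)"

definition proj_eq :: "cvec \<Rightarrow> cvec \<Rightarrow> bool" where
  "proj_eq u v \<longleftrightarrow> (\<exists>c::complex. c \<noteq> 0 \<and> u = c *s v)"

definition det3 :: "cvec \<Rightarrow> cvec \<Rightarrow> cvec \<Rightarrow> complex" where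
  "det3 a b c = det (vector [a, b, c] :: complex ^ 3 ^ 3)"

definition arrangement :: "(nat \<Rightarrow> cvec) \<Rightarrow> nat \<Rightarrow> bool" where
  "arrangement H n \<longleftrightarrow> (\<forall>i<n. H i \<noteq> 0) \<and>
     (\<forall>i<n. \<forall>j<n. i \<noteq> j \<longrightarrow> \<not> proj_eq (H i) (H j))"

definition incidence :: "(nat \<Rightarrow> cvec) \<Rightarrow> nat \<Rightarrow> nat set set" where
  "incidence H n = {{i, j, k} | i j k. i < n \<and> j < n \<and> k < n \<and>
       i \<noteq> j \<and> i \<noteq> k \<and> j \<noteq> k \<and>
       (\<exists>p. p \<noteq> 0 \<and> linform (H i) p = 0 \<and> linform (H j) p = 0 \<and> linform (H k) p = 0)}"

definition multpts :: "(nat \<Rightarrow> cvec) \<Rightarrow> nat \<Rightarrow> cvec set set" where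
  "multpts H m = {projpt p | p. p \<noteq> 0 \<and> 3 \<le> card {i. i < m \<and> linform (H i) p = 0}}"

definition ptsOn :: "cvec \<Rightarrow> cvec set set" where
  "ptsOn a = {projpt p | p. p \<noteq> 0 \<and> linform a p = 0}"

definition ind_conn :: "(nat \<Rightarrow> cvec) \<Rightarrow> nat \<Rightarrow> bool" where
  "ind_conn H n \<longleftrightarrow> (\<exists>s. bij_betw s {..<n} {..<n} \<and>
     (\<forall>t<n. card (ptsOn (H (s t)) \<inter> multpts (H \<circ> s) (Suc t)) \<le> 2))"

text \<open>Realization space R(I) for n lines, as its affine cone: tuples of nonzero coefficient
  vectors (entries with index \<ge> n set to 0), pairwise non-proportional, with
  det(H_i,H_j,H_k) = 0 iff {i,j,k} \<in> I, for pairwise distinct i,j,k < n.\<close>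
definition realiz :: "nat \<Rightarrow> nat set set \<Rightarrow> (nat \<Rightarrow> cvec) set" where
  "realiz n I = {G. (\<forall>i. n \<le> i \<longrightarrow> G i = 0) \<and> (\<forall>i<n. G i \<noteq> 0) \<and>
     (\<forall>i<n. \<forall>j<n. i \<noteq> j \<longrightarrow> \<not> proj_eq (G i) (G j)) \<and>
     (\<forall>i<n. \<forall>j<n. \<forall>k<n. i \<noteq> j \<and> i \<noteq> k \<and> j \<noteq> k \<longrightarrow>
        (det3 (G i) (G j) (G k) = 0 \<longleftrightarrow> {i, j, k} \<in> I))}"

definition realizK :: "complex set \<Rightarrow> nat \<Rightarrow> nat set set \<Rightarrow> (nat \<Rightarrow> cvec) set" where
  "realizK K n I = {G \<in> realiz n I. \<forall>i j. G i $ j \<in> K}"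

inductive_set polyfun :: "((nat \<Rightarrow> cvec) \<Rightarrow> complex) set" where
  pf_const: "(\<lambda>G. c) \<in> polyfun"
| pf_var: "(\<lambda>G. G i $ j) \<in> polyfun"
| pf_add: "f \<in> polyfun \<Longrightarrow> g \<in> polyfun \<Longrightarrow> (\<lambda>G. f G + g G) \<in> polyfun"
| pf_mult: "f \<in> polyfun \<Longrightarrow> g \<in> polyfun \<Longrightarrow> (\<lambda>G. f G * g G) \<in> polyfun"

definition zariski_dense :: "(nat \<Rightarrow> cvec) set \<Rightarrow> (nat \<Rightarrow> cvec) set \<Rightarrow> bool" where
  "zariski_dense S T \<longleftrightarrow> S \<subseteq> T \<and>
     (\<forall>f\<in>polyfun. (\<forall>G\<in>S. f G = 0) \<longrightarrow> (\<forall>G\<in>T. f G = 0))"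

definition subfield_C :: "complex set \<Rightarrow> bool" where
  "subfield_C K \<longleftrightarrow> 0 \<in> K \<and> 1 \<in> K \<and> (\<forall>x\<in>K. \<forall>y\<in>K. x + y \<in> K \<and> x * y \<in> K) \<and>
     (\<forall>x\<in>K. - x \<in> K \<and> inverse x \<in> K)"

end

theory Submission
  imports Defs "HOL-Computational_Algebra.Polynomial"
begin

definition cr :: "cvec \<Rightarrow> cvec \<Rightarrow> cvec" where
  "cr a b = vector [a$2*b$3 - a$3*b$2, a$3*b$1 - a$1*b$3, a$1*b$2 - a$2*b$1]"

lemma cr_comp [simp]:
  "cr a b $ 1 = a$2*b$3 - a$3*b$2" "cr a b $ 2 = a$3*b$1 - a$1*b$3" "cr a b $ 3 = a$1*b$2 - a$2*b$1"
  by (simp_all add: cr_def)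

lemma lf_exp: "linform a p = a$1*p$1 + a$2*p$2 + a$3*p$3"
  by (simp add: linform_def sum_3)

lemma det3_exp: "det3 a b c = linform a (cr b c)"
  unfolding det3_def det_3 lf_exp by (simp add: algebra_simps)

lemma vec3_eq: "(u::cvec) = v \<longleftrightarrow> u$1 = v$1 \<and> u$2 = v$2 \<and> u$3 = v$3"
  by (simp add: vec_eq_iff forall_3)

lemma vec3_zero: "(u::cvec) = 0 \<longleftrightarrow> u$1 = 0 \<and> u$2 = 0 \<and> u$3 = 0"
  by (simp add: vec3_eq)

lemma lf_sym: "linform a p = linform p a"
  by (simp add: lf_exp algebra_simps)

lemma lf_scale: "linform a (c *s p) = c * linform a p"
  by (simp add: lf_exp algebra_simps)

lemma lf_scale2: "linform (c *s a) p = c * linform a p"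
  by (simp add: lf_exp algebra_simps)

lemma cr_orth1: "linform a (cr a b) = 0" by (simp add: lf_exp algebra_simps)
lemma cr_orth2: "linform b (cr a b) = 0" by (simp add: lf_exp algebra_simps)

lemma det3_cyc: "det3 a b c = det3 b c a" "det3 a b c = det3 c a b"
  by (simp_all add: det3_exp lf_exp algebra_simps)
lemma det3_swap: "det3 a b c = - det3 b a c" "det3 a b c = - det3 a c b" "det3 a b c = - det3 c b a"
  by (simp_all add: det3_exp lf_exp algebra_simps)
lemma det3_rep: "det3 a a c = 0" "det3 a b a = 0" "det3 a b b = 0"
  by (simp_all add: det3_exp lf_exp algebra_simps)

lemma cr_anti: "cr a b = - cr b a" by (simp add: vec3_eq)
lemma cr_scale: "cr (c *s a) b = c *s cr a b" by (simp add: vec3_eq algebra_simps)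

lemma triple_id: "det3 a b c *s p = linform p a *s cr b c + linform p b *s cr c a + linform p c *s cr a b"
  by (simp add: vec3_eq det3_exp lf_exp algebra_simps)

lemma det3_common: "p \<noteq> 0 \<Longrightarrow> linform a p = 0 \<Longrightarrow> linform b p = 0 \<Longrightarrow> linform c p = 0 \<Longrightarrow> det3 a b c = 0"
  using triple_id[of a b c p] by (simp add: lf_sym)

lemma bac: "cr p (cr a b) = linform p b *s a - linform p a *s b"
  by (simp add: vec3_eq lf_exp algebra_simps)

lemma cr_zero_par: assumes "cr x y = 0" "y \<noteq> 0" shows "\<exists>t. x = t *s y"
proof -
  from assms have e: "x$2*y$3 = x$3*y$2" "x$3*y$1 = x$1*y$3" "x$1*y$2 = x$2*y$1"
    by (simp_all add: vec3_eq)
  from assms(2) consider "y$1 \<noteq> 0" | "y$2 \<noteq> 0" | "y$3 \<noteq> 0" by (auto simp: vec3_zero)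
  then show ?thesis
  proof cases
    case 1 show ?thesis
      by (rule exI[of _ "x$1/y$1"]) (use 1 e in \<open>simp add: vec3_eq field_simps\<close>)
  next
    case 2 show ?thesis
      by (rule exI[of _ "x$2/y$2"]) (use 2 e in \<open>simp add: vec3_eq field_simps\<close>)
  next
    case 3 show ?thesis
      by (rule exI[of _ "x$3/y$3"]) (use 3 e in \<open>simp add: vec3_eq field_simps\<close>)
  qed
qed

lemma perp_par: assumes "linform a p = 0" "linform b p = 0" "cr a b \<noteq> 0" shows "\<exists>t. p = t *s cr a b"
  using cr_zero_par[of p "cr a b"] bac[of p a b] assms by (simp add: lf_sym)

lemma projeq_cr: assumes "a \<noteq> 0" "b \<noteq> 0" shows "proj_eq a b \<longleftrightarrow> cr a b = 0"
proof
  assume "proj_eq a b" then obtain c where "a = c *s b" by (auto simp: proj_eq_def)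
  then show "cr a b = 0" by (simp add: vec3_eq algebra_simps)
next
  assume "cr a b = 0" then obtain t where t: "a = t *s b" using cr_zero_par assms by blast
  with assms have "t \<noteq> 0" by auto
  with t show "proj_eq a b" by (auto simp: proj_eq_def)
qed

lemma det_conc: assumes "cr a b \<noteq> 0"
  shows "det3 a b c = 0 \<longleftrightarrow> (\<exists>p. p \<noteq> 0 \<and> linform a p = 0 \<and> linform b p = 0 \<and> linform c p = 0)"
proof
  assume "det3 a b c = 0" then show "\<exists>p. p \<noteq> 0 \<and> linform a p = 0 \<and> linform b p = 0 \<and> linform c p = 0"
  proof -
    assume d: "det3 a b c = 0"
    have "linform c (cr a b) = det3 a b c" by (simp add: det3_exp lf_exp algebra_simps)
    with d assms show ?thesis by (intro exI[of _ "cr a b"]) (simp add: cr_orth1 cr_orth2)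
  qed
next
  assume "\<exists>p. p \<noteq> 0 \<and> linform a p = 0 \<and> linform b p = 0 \<and> linform c p = 0"
  then show "det3 a b c = 0" using det3_common by blast
qed

lemma cr_through: "u \<noteq> 0 \<Longrightarrow> linform h u = 0 \<Longrightarrow> \<exists>v. cr v u = h"
proof -
  assume u: "u \<noteq> 0" and h: "linform h u = 0"
  then have h': "h$1*u$1 + h$2*u$2 + h$3*u$3 = 0" by (simp add: lf_exp)
  from u consider "u$1 \<noteq> 0" | "u$2 \<noteq> 0" | "u$3 \<noteq> 0" by (auto simp: vec3_zero)
  then show ?thesis
  proof cases
    case 1
    then have e: "h$1 = -(h$2*u$2+h$3*u$3)/u$1" using h' by (simp add: field_simps add_eq_0_iff)
    show ?thesis
      by (rule exI[of _ "vector [0, - h$3/u$1, h$2/u$1]"]) (use 1 e h' in \<open>simp add: vec3_eq field_simps, algebra\<close>)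
  next
    case 2
    then have e: "h$2 = -(h$1*u$1+h$3*u$3)/u$2" using h' by (simp add: field_simps add_eq_0_iff)
    show ?thesis
      by (rule exI[of _ "vector [h$3/u$2, 0, - h$1/u$2]"]) (use 2 e in \<open>simp add: vec3_eq field_simps\<close>)
  next
    case 3
    then have e: "h$3 = -(h$1*u$1+h$2*u$2)/u$3" using h' by (simp add: field_simps add_eq_0_iff)
    show ?thesis
      by (rule exI[of _ "vector [- h$2/u$3, h$1/u$3, 0]"]) (use 3 e h' in \<open>simp add: vec3_eq field_simps, algebra\<close>)
  qed
qed

lemma pf_sub: "f \<in> polyfun \<Longrightarrow> g \<in> polyfun \<Longrightarrow> (\<lambda>G. f G - g G) \<in> polyfun"
proof -
  assume f: "f \<in> polyfun" and g: "g \<in> polyfun"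
  have "(\<lambda>G. (-1) * g G) \<in> polyfun" by (rule pf_mult[OF pf_const g])
  from pf_add[OF f this] show ?thesis by simp
qed

lemma pf_prod: "finite A \<Longrightarrow> (\<And>a. a \<in> A \<Longrightarrow> f a \<in> polyfun) \<Longrightarrow> (\<lambda>G. \<Prod>a\<in>A. f a G) \<in> polyfun"
proof (induction A rule: finite_induct)
  case empty then show ?case by (simp add: pf_const)
next
  case (insert x F)
  then have "(\<lambda>G. f x G * (\<Prod>a\<in>F. f a G)) \<in> polyfun" by (intro pf_mult) auto
  with insert show ?case by simp
qed

lemma pf_subst:
  assumes "f \<in> polyfun" "\<And>i j. (\<lambda>G. \<sigma> G i $ j) \<in> polyfun"
  shows "(\<lambda>G. f (\<sigma> G)) \<in> polyfun"
  using assms(1)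
proof induction
  case (pf_const c) then show ?case by (rule polyfun.pf_const)
next
  case (pf_var i j) then show ?case using assms(2) by simp
next
  case (pf_add f g) then show ?case using polyfun.pf_add[of "\<lambda>G. f (\<sigma> G)" "\<lambda>G. g (\<sigma> G)"] by simp
next
  case (pf_mult f g) then show ?case using polyfun.pf_mult[of "\<lambda>G. f (\<sigma> G)" "\<lambda>G. g (\<sigma> G)"] by simp
qed

definition vupd :: "cvec \<Rightarrow> 3 \<Rightarrow> complex \<Rightarrow> cvec" where
  "vupd v j x = (\<chi> k. if k = j then x else v $ k)"

lemma vupd_same: "vupd v j (v $ j) = v"
  by (simp add: vupd_def vec_eq_iff)

lemma pf_univ:
  assumes "f \<in> polyfun"
  shows "\<exists>p. \<forall>x. f (G0(i := vupd (G0 i) j x)) = poly p x"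
  using assms
proof induction
  case (pf_const c) then show ?case by (intro exI[of _ "[:c:]"]) simp
next
  case (pf_var i' j')
  show ?case
  proof (cases "i' = i \<and> j' = j")
    case True then show ?thesis by (intro exI[of _ "[:0,1:]"]) (simp add: vupd_def)
  next
    case False then show ?thesis
      by (intro exI[of _ "[:G0 i' $ j':]"]) (auto simp add: vupd_def)
  qed
next
  case (pf_add f g)
  then obtain p q where pq: "\<forall>x. f (G0(i := vupd (G0 i) j x)) = poly p x" "\<forall>x. g (G0(i := vupd (G0 i) j x)) = poly q x" by blast
  have "\<forall>x. f (G0(i := vupd (G0 i) j x)) + g (G0(i := vupd (G0 i) j x)) = poly (p + q) x"
  proof
    fix x show "f (G0(i := vupd (G0 i) j x)) + g (G0(i := vupd (G0 i) j x)) = poly (p + q) x"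
      unfolding poly_add pq(1)[rule_format, of x] pq(2)[rule_format, of x] ..
  qed
  then show ?case by blast
next
  case (pf_mult f g)
  then obtain p q where pq: "\<forall>x. f (G0(i := vupd (G0 i) j x)) = poly p x" "\<forall>x. g (G0(i := vupd (G0 i) j x)) = poly q x" by blast
  have "\<forall>x. f (G0(i := vupd (G0 i) j x)) * g (G0(i := vupd (G0 i) j x)) = poly (p * q) x"
  proof
    fix x show "f (G0(i := vupd (G0 i) j x)) * g (G0(i := vupd (G0 i) j x)) = poly (p * q) x"
      unfolding poly_mult pq(1)[rule_format, of x] pq(2)[rule_format, of x] ..
  qed
  then show ?case by blast
qed

lemma subfield_nat: "subfield_C K \<Longrightarrow> of_nat k \<in> K"
  by (induction k) (auto simp: subfield_C_def)

lemma subfield_inf: "subfield_C K \<Longrightarrow> infinite K"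
proof
  assume K: "subfield_C K" "finite K"
  have "range (of_nat :: nat \<Rightarrow> complex) \<subseteq> K" using subfield_nat[OF K(1)] by auto
  moreover have "infinite (range (of_nat :: nat \<Rightarrow> complex))"
    by (rule range_inj_infinite) (simp add: inj_def)
  ultimately show False using K(2) finite_subset by blast
qed

lemma subfield_diff: "subfield_C K \<Longrightarrow> x \<in> K \<Longrightarrow> y \<in> K \<Longrightarrow> x - y \<in> K"
proof -
  assume K: "subfield_C K" "x \<in> K" "y \<in> K"
  then have "- y \<in> K" by (simp add: subfield_C_def)
  with K have "x + - y \<in> K" unfolding subfield_C_def by blast
  then show ?thesis by simp
qed

lemma poly_zero_inf: "infinite K \<Longrightarrow> \<forall>x\<in>K. poly p x = 0 \<Longrightarrow> poly p y = (0::complex)"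
proof (cases "p = 0")
  case False
  assume "infinite K" "\<forall>x\<in>K. poly p x = 0"
  then have "K \<subseteq> {x. poly p x = 0}" by auto
  with poly_roots_finite[OF False] \<open>infinite K\<close> show ?thesis using finite_subset by blast
qed simp

lemma pf_K_one:
  assumes "infinite K" "f \<in> polyfun" "\<forall>x\<in>K. f (G0(i := vupd (G0 i) j x)) = 0"
  shows "f (G0(i := vupd (G0 i) j x)) = 0"
proof -
  obtain p where p: "\<forall>x. f (G0(i := vupd (G0 i) j x)) = poly p x" using pf_univ[OF assms(2)] by blast
  show ?thesis using poly_zero_inf[OF assms(1), of p x] p assms(3) by simp
qed

lemma pf_K_vec:
  assumes "infinite K" "f \<in> polyfun" "\<forall>u. (\<forall>j. u $ j \<in> K) \<longrightarrow> f (G(i := u)) = 0"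
  shows "f (G(i := u)) = 0"
proof -
  have "finite J \<Longrightarrow> \<forall>u. (\<forall>j. u $ j \<in> K \<or> j \<in> J) \<longrightarrow> f (G(i := u)) = 0" for J :: "3 set"
  proof (induction J rule: finite_induct)
    case empty
    show ?case
    proof (intro allI impI)
      fix u :: cvec assume "\<forall>j. u $ j \<in> K \<or> j \<in> {}"
      then have "\<forall>j. u $ j \<in> K" by simp
      then show "f (G(i := u)) = 0" using assms(3) by blast
    qed
  next
    case (insert j J)
    show ?case
    proof (intro allI impI)
      fix u :: cvec assume u: "\<forall>j'. u $ j' \<in> K \<or> j' \<in> insert j J"
      have "\<forall>x\<in>K. f ((G(i := u))(i := vupd ((G(i := u)) i) j x)) = 0"
      proof
        fix x assume "x \<in> K"
        have v: "\<forall>j'. vupd u j x $ j' \<in> K \<or> j' \<in> J" using u \<open>x \<in> K\<close> by (auto simp: vupd_def)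
        have e: "(G(i := u))(i := vupd ((G(i := u)) i) j x) = G(i := vupd u j x)" by simp
        show "f ((G(i := u))(i := vupd ((G(i := u)) i) j x)) = 0"
          unfolding e using insert.IH v by blast
      qed
      from pf_K_one[OF assms(1,2) this, of "u $ j"]
      have "f ((G(i := u))(i := vupd ((G(i := u)) i) j (u $ j))) = 0" .
      moreover have "(G(i := u))(i := vupd ((G(i := u)) i) j (u $ j)) = G(i := u)" by (simp add: vupd_same)
      ultimately show "f (G(i := u)) = 0" by simp
    qed
  qed
  from this[of UNIV] have "\<forall>u. (\<forall>j. u $ j \<in> K \<or> j \<in> UNIV) \<longrightarrow> f (G(i := u)) = 0" by simp
  then show ?thesis by blast
qed

lemma pf_cr:
  assumes "\<And>j. (\<lambda>G. a G $ j) \<in> polyfun" "\<And>j. (\<lambda>G. b G $ j) \<in> polyfun"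
  shows "(\<lambda>G. cr (a G) (b G) $ j) \<in> polyfun"
proof -
  have "j = 1 \<or> j = 2 \<or> j = 3" using exhaust_3 by blast
  then show ?thesis using assms by (auto intro!: pf_sub pf_mult)
qed

lemma pf_lf:
  assumes "\<And>j. (\<lambda>G. a G $ j) \<in> polyfun" "\<And>j. (\<lambda>G. b G $ j) \<in> polyfun"
  shows "(\<lambda>G. linform (a G) (b G)) \<in> polyfun"
  unfolding lf_exp using assms by (auto intro!: pf_add pf_mult)

lemma pf_det3:
  assumes "\<And>j. (\<lambda>G. a G $ j) \<in> polyfun" "\<And>j. (\<lambda>G. b G $ j) \<in> polyfun" "\<And>j. (\<lambda>G. c G $ j) \<in> polyfun"
  shows "(\<lambda>G. det3 (a G) (b G) (c G)) \<in> polyfun"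
  unfolding det3_exp using assms by (intro pf_lf pf_cr) auto

lemma pf_var': "(\<lambda>G. G i $ j) \<in> polyfun" by (rule pf_var)

lemma K_cr: "subfield_C K \<Longrightarrow> \<forall>j. a $ j \<in> K \<Longrightarrow> \<forall>j. b $ j \<in> K \<Longrightarrow> cr a b $ j \<in> K"
proof -
  assume K: "subfield_C K" "\<forall>j. a $ j \<in> K" "\<forall>j. b $ j \<in> K"
  have m: "x \<in> K \<Longrightarrow> y \<in> K \<Longrightarrow> x * y \<in> K" for x y using K(1) by (simp add: subfield_C_def)
  have "j = 1 \<or> j = 2 \<or> j = 3" using exhaust_3 by blast
  then show ?thesis using K by (auto intro!: subfield_diff m)
qed

lemma det3_z: "det3 a b c = 0 \<longleftrightarrow> det3 b c a = 0" "det3 a b c = 0 \<longleftrightarrow> det3 c a b = 0"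
  "det3 a b c = 0 \<longleftrightarrow> det3 b a c = 0" "det3 a b c = 0 \<longleftrightarrow> det3 a c b = 0" "det3 a b c = 0 \<longleftrightarrow> det3 c b a = 0"
  using det3_cyc[of a b c] det3_swap[of a b c] by auto

lemma incid_conc:
  assumes "i < n" "j < n" "k < n" "i \<noteq> j" "i \<noteq> k" "j \<noteq> k"
  shows "{i,j,k} \<in> incidence H n \<longleftrightarrow> (\<exists>p. p \<noteq> 0 \<and> linform (H i) p = 0 \<and> linform (H j) p = 0 \<and> linform (H k) p = 0)"
proof
  assume "{i,j,k} \<in> incidence H n"
  then have "\<exists>i' j' k'. {i,j,k} = {i',j',k'} \<and> i' < n \<and> j' < n \<and> k' < n \<and> i' \<noteq> j' \<and> i' \<noteq> k' \<and> j' \<noteq> k' \<and>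
       (\<exists>p. p \<noteq> 0 \<and> linform (H i') p = 0 \<and> linform (H j') p = 0 \<and> linform (H k') p = 0)"
    unfolding incidence_def mem_Collect_eq .
  then obtain i' j' k' p where e: "{i,j,k} = {i',j',k'}" and p: "p \<noteq> 0" "linform (H i') p = 0" "linform (H j') p = 0" "linform (H k') p = 0"
    by (elim exE conjE) (rule that)
  have "linform (H x) p = 0" if "x \<in> {i,j,k}" for x
  proof -
    have "x \<in> {i',j',k'}" using that e by simp
    then show ?thesis using p by auto
  qed
  then show "\<exists>p. p \<noteq> 0 \<and> linform (H i) p = 0 \<and> linform (H j) p = 0 \<and> linform (H k) p = 0" using p(1) by auto
next
  assume "\<exists>p. p \<noteq> 0 \<and> linform (H i) p = 0 \<and> linform (H j) p = 0 \<and> linform (H k) p = 0"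
  then show "{i,j,k} \<in> incidence H n" unfolding incidence_def mem_Collect_eq using assms by blast
qed

lemma arr_cr: "arrangement H n \<Longrightarrow> i < n \<Longrightarrow> j < n \<Longrightarrow> i \<noteq> j \<Longrightarrow> cr (H i) (H j) \<noteq> 0"
proof -
  assume a: "arrangement H n" "i < n" "j < n" "i \<noteq> j"
  then have "H i \<noteq> 0" "H j \<noteq> 0" "\<not> proj_eq (H i) (H j)" unfolding arrangement_def by auto
  then show ?thesis using projeq_cr by simp
qed

lemma realiz_cr: "G \<in> realiz n I \<Longrightarrow> i < n \<Longrightarrow> j < n \<Longrightarrow> i \<noteq> j \<Longrightarrow> cr (G i) (G j) \<noteq> 0"
proof -
  assume a: "G \<in> realiz n I" "i < n" "j < n" "i \<noteq> j"
  then have "G i \<noteq> 0" "G j \<noteq> 0" "\<not> proj_eq (G i) (G j)" unfolding realiz_def by auto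
  then show ?thesis using projeq_cr by simp
qed

lemma arr_mono: "arrangement H n \<Longrightarrow> m \<le> n \<Longrightarrow> arrangement H m"
  unfolding arrangement_def by auto

lemma incid_det:
  assumes "arrangement H n" "i < n" "j < n" "k < n" "i \<noteq> j" "i \<noteq> k" "j \<noteq> k"
  shows "{i,j,k} \<in> incidence H n \<longleftrightarrow> det3 (H i) (H j) (H k) = 0"
  using incid_conc[OF assms(2-7)] det_conc[OF arr_cr[OF assms(1,2,3,5)]] by simp

lemma RD:
  assumes "arrangement H n" "G \<in> realiz n (incidence H n)" "a < n" "b < n" "c < n"
  shows "det3 (G a) (G b) (G c) = 0 \<longleftrightarrow> det3 (H a) (H b) (H c) = 0"
proof (cases "a \<noteq> b \<and> a \<noteq> c \<and> b \<noteq> c")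
  case True
  then have "det3 (G a) (G b) (G c) = 0 \<longleftrightarrow> {a,b,c} \<in> incidence H n"
    using assms(2-5) unfolding realiz_def by blast
  then show ?thesis using incid_det[OF assms(1,3,4,5)] True by simp
next
  case False then show ?thesis by (auto simp: det3_rep)
qed

lemma trunc_realiz:
  assumes "arrangement H n"
  shows "(\<lambda>i. if i < n then H i else 0) \<in> realiz n (incidence H n)"
  using assms incid_det[OF assms] unfolding realiz_def arrangement_def by auto

lemma restrict_realiz:
  assumes arr: "arrangement H (Suc m)" and G: "G \<in> realiz (Suc m) (incidence H (Suc m))"
  shows "G(m := 0) \<in> realiz m (incidence H m)"
proof -
  have arr': "arrangement H m" using arr_mono[OF arr] by simp
  have "det3 (G i) (G j) (G k) = 0 \<longleftrightarrow> {i,j,k} \<in> incidence H m"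
    if "i < m" "j < m" "k < m" "i \<noteq> j" "i \<noteq> k" "j \<noteq> k" for i j k
    using RD[OF arr G, of i j k] incid_det[OF arr' that] that by simp
  then show ?thesis using G unfolding realiz_def by auto
qed

lemma extend_realiz:
  assumes arr: "arrangement H (Suc m)" and G': "G' \<in> realiz m (incidence H m)"
    and h0: "h \<noteq> 0" and hc: "\<forall>i<m. cr h (G' i) \<noteq> 0"
    and hd: "\<forall>a b. a < m \<longrightarrow> b < m \<longrightarrow> a \<noteq> b \<longrightarrow> (det3 (G' a) (G' b) h = 0 \<longleftrightarrow> det3 (H a) (H b) (H m) = 0)"
  shows "G'(m := h) \<in> realiz (Suc m) (incidence H (Suc m))"
proof -
  have arr': "arrangement H m" using arr_mono[OF arr] by simp
  let ?X = "G'(m := h)"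
  have z: "\<forall>i. Suc m \<le> i \<longrightarrow> ?X i = 0" using G' unfolding realiz_def by auto
  have nz: "\<forall>i<Suc m. ?X i \<noteq> 0" using G' h0 unfolding realiz_def by (auto simp: less_Suc_eq)
  have np: "\<not> proj_eq (?X i) (?X j)" if "i < Suc m" "j < Suc m" "i \<noteq> j" for i j
  proof (cases "i = m \<or> j = m")
    case True
    then show ?thesis
    proof
      assume "i = m" then have "j < m" using that by auto
      then have "G' j \<noteq> 0" using G' unfolding realiz_def by auto
      then show ?thesis using \<open>i = m\<close> \<open>j < m\<close> hc h0 projeq_cr that by auto
    next
      assume "j = m" then have "i < m" using that by auto
      then have "G' i \<noteq> 0" using G' unfolding realiz_def by auto
      moreover have "cr (G' i) h \<noteq> 0" using hc \<open>i < m\<close> by (metis cr_anti neg_equal_0_iff_equal)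
      ultimately show ?thesis using \<open>j = m\<close> \<open>i < m\<close> h0 projeq_cr that by auto
    qed
  next
    case False
    then show ?thesis using G' that unfolding realiz_def by auto
  qed
  have dd: "det3 (?X i) (?X j) (?X k) = 0 \<longleftrightarrow> det3 (H i) (H j) (H k) = 0"
    if a: "i < Suc m" "j < Suc m" "k < Suc m" "i \<noteq> j" "i \<noteq> k" "j \<noteq> k" for i j k
  proof -
    consider "i = m" | "j = m" | "k = m" | "i < m" "j < m" "k < m" using a(1-3) unfolding less_Suc_eq by blast
    then show ?thesis
    proof cases
      case 1 then have "j < m" "k < m" using a by auto
      then show ?thesis using 1 hd a det3_z(1)[of h "G' j" "G' k"] det3_z(1)[of "H m" "H j" "H k"] by auto
    next
      case 2 then have "i < m" "k < m" using a by auto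
      then show ?thesis using 2 hd a det3_z(4)[of "G' i" h "G' k"] det3_z(4)[of "H i" "H m" "H k"] by auto
    next
      case 3 then have "i < m" "j < m" using a by auto
      then show ?thesis using 3 hd a by auto
    next
      case 4 then show ?thesis using RD[OF arr' G', of i j k] by simp
    qed
  qed
  show ?thesis unfolding realiz_def
    using z nz np dd incid_det[OF arr] by auto
qed

lemma realizK_sub: "realizK K n I \<subseteq> realiz n I" unfolding realizK_def by auto

lemma dense_nonempty: "zariski_dense S T \<Longrightarrow> T \<noteq> {} \<Longrightarrow> S \<noteq> {}"
  unfolding zariski_dense_def using pf_const[of 1] by fastforce

lemma pf_upd:
  assumes "\<And>j. (\<lambda>X. \<Phi> X $ j) \<in> polyfun"
  shows "(\<lambda>X. (X(m := \<Phi> X)) i $ j) \<in> polyfun"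
proof (cases "i = m")
  case True then show ?thesis using assms by simp
next
  case False then show ?thesis using pf_var[of i j] by simp
qed

lemma step_generic:
  assumes K: "subfield_C K" and arr: "arrangement H (Suc m)"
    and dense: "zariski_dense (realizK K m (incidence H m)) (realiz m (incidence H m))"
    and Phipf: "\<And>j. (\<lambda>X. \<Phi> X $ j) \<in> polyfun"
    and PhiK: "\<And>G' u. G' \<in> realizK K m (incidence H m) \<Longrightarrow> \<forall>j. u $ j \<in> K \<Longrightarrow> \<forall>j. \<Phi> (G'(m := u)) $ j \<in> K"
    and Phidet: "\<And>G' u a b. G' \<in> realiz m (incidence H m) \<Longrightarrow> a < m \<Longrightarrow> b < m \<Longrightarrow> a \<noteq> b \<Longrightarrow>
                   det3 (H a) (H b) (H m) = 0 \<Longrightarrow> det3 (G' a) (G' b) (\<Phi> (G'(m := u))) = 0"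
    and Phisurj: "\<And>G. G \<in> realiz (Suc m) (incidence H (Suc m)) \<Longrightarrow> \<exists>u. \<Phi> (G(m := u)) = G m"
  shows "zariski_dense (realizK K (Suc m) (incidence H (Suc m))) (realiz (Suc m) (incidence H (Suc m)))"
proof -
  let ?S' = "realizK K m (incidence H m)" and ?T' = "realiz m (incidence H m)"
  let ?S = "realizK K (Suc m) (incidence H (Suc m))" and ?T = "realiz (Suc m) (incidence H (Suc m))"
  have infK: "infinite K" using subfield_inf[OF K] .
  have ST: "?S' \<subseteq> ?T'" using realizK_sub by blast
  have main: "f G = 0" if f: "f \<in> polyfun" and fS: "\<forall>G\<in>?S. f G = 0" and G: "G \<in> ?T" for f G
  proof -
    have Gm: "G m \<noteq> 0" using G unfolding realiz_def by auto
    then obtain j0 where j0: "G m $ j0 \<noteq> 0" by (auto simp: vec_eq_iff)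
    define c where "c i = (SOME j. cr (G m) (G i) $ j \<noteq> 0)" for i
    have c: "cr (G m) (G i) $ c i \<noteq> 0" if "i < m" for i
    proof -
      have "cr (G m) (G i) \<noteq> 0" using realiz_cr[OF G, of m i] that by simp
      then have "\<exists>j. cr (G m) (G i) $ j \<noteq> 0" by (auto simp: vec_eq_iff)
      then show ?thesis unfolding c_def by (rule someI_ex)
    qed
    define D where "D = {..<m} \<times> {..<m}"
    define g where "g X = X m $ j0 * (\<Prod>i\<in>{..<m}. cr (X m) (X i) $ c i) *
       (\<Prod>ab\<in>D. if fst ab \<noteq> snd ab \<and> det3 (H (fst ab)) (H (snd ab)) (H m) \<noteq> 0
                  then det3 (X (fst ab)) (X (snd ab)) (X m) else 1)" for X
    have gpf: "g \<in> polyfun"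
    proof -
      have 1: "(\<lambda>X. \<Prod>i\<in>{..<m}. cr (X m) (X i) $ c i) \<in> polyfun"
        by (rule pf_prod) (auto intro!: pf_cr pf_var)
      have 2: "(\<lambda>X. \<Prod>ab\<in>D. if fst ab \<noteq> snd ab \<and> det3 (H (fst ab)) (H (snd ab)) (H m) \<noteq> 0
                  then det3 (X (fst ab)) (X (snd ab)) (X m) else 1) \<in> polyfun"
      proof (rule pf_prod)
        show "finite D" unfolding D_def by simp
      next
        fix ab
        show "(\<lambda>X. if fst ab \<noteq> snd ab \<and> det3 (H (fst ab)) (H (snd ab)) (H m) \<noteq> 0
                  then det3 (X (fst ab)) (X (snd ab)) (X m) else 1) \<in> polyfun"
        proof (cases "fst ab \<noteq> snd ab \<and> det3 (H (fst ab)) (H (snd ab)) (H m) \<noteq> 0")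
          case True then show ?thesis by (simp add: pf_det3 pf_var)
        next
          case False then show ?thesis using pf_const[of 1] by (simp only: False if_False)
        qed
      qed
      have "(\<lambda>X. X m $ j0 * (\<Prod>i\<in>{..<m}. cr (X m) (X i) $ c i)) \<in> polyfun"
        by (rule pf_mult[OF pf_var 1])
      from pf_mult[OF this 2] show ?thesis unfolding g_def[abs_def] .
    qed
    have gnz: "g X \<noteq> 0 \<longleftrightarrow> X m $ j0 \<noteq> 0 \<and> (\<forall>i<m. cr (X m) (X i) $ c i \<noteq> 0) \<and>
        (\<forall>a b. a < m \<longrightarrow> b < m \<longrightarrow> a \<noteq> b \<longrightarrow> det3 (H a) (H b) (H m) \<noteq> 0 \<longrightarrow> det3 (X a) (X b) (X m) \<noteq> 0)" for X
      unfolding g_def D_def by (auto simp: prod_zero_iff split: if_splits)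
    have gG: "g G \<noteq> 0"
      unfolding gnz using j0 c RD[OF arr G] by auto
    define \<sigma> where "\<sigma> X = X(m := \<Phi> X)" for X
    define F where "F X = f (\<sigma> X) * g (\<sigma> X)" for X
    have Fpf: "F \<in> polyfun"
    proof -
      have s: "(\<lambda>X. \<sigma> X i $ j) \<in> polyfun" for i j unfolding \<sigma>_def by (rule pf_upd[OF Phipf])
      show ?thesis unfolding F_def[abs_def] by (rule pf_mult; rule pf_subst[OF _ s]; fact)
    qed
    have claimA: "F (G'(m := u)) = 0" if G': "G' \<in> ?S'" and u: "\<forall>j. u $ j \<in> K" for G' u
    proof (cases "g (\<sigma> (G'(m := u))) = 0")
      case True then show ?thesis unfolding F_def by simp
    next
      case False
      define h where "h = \<Phi> (G'(m := u))"
      have se: "\<sigma> (G'(m := u)) = G'(m := h)" unfolding \<sigma>_def h_def by simp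
      have G'T: "G' \<in> ?T'" using G' ST by blast
      from False have gg: "g (G'(m := h)) \<noteq> 0" unfolding se .
      have h0: "h \<noteq> 0" using gg unfolding gnz by (auto simp: vec_eq_iff)
      have hc: "\<forall>i<m. cr h (G' i) \<noteq> 0" using gg unfolding gnz by (auto simp: vec_eq_iff)
      have hd: "\<forall>a b. a < m \<longrightarrow> b < m \<longrightarrow> a \<noteq> b \<longrightarrow> (det3 (G' a) (G' b) h = 0 \<longleftrightarrow> det3 (H a) (H b) (H m) = 0)"
      proof (intro allI impI)
        fix a b assume ab: "a < m" "b < m" "a \<noteq> b"
        show "det3 (G' a) (G' b) h = 0 \<longleftrightarrow> det3 (H a) (H b) (H m) = 0"
        proof
          assume "det3 (G' a) (G' b) h = 0"
          then show "det3 (H a) (H b) (H m) = 0" using gg ab unfolding gnz by auto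
        next
          assume "det3 (H a) (H b) (H m) = 0"
          then show "det3 (G' a) (G' b) h = 0" unfolding h_def using Phidet[OF G'T ab] by blast
        qed
      qed
      have XT: "G'(m := h) \<in> ?T" by (rule extend_realiz[OF arr G'T h0 hc hd])
      have hK: "\<forall>j. h $ j \<in> K" unfolding h_def using PhiK[OF G' u] .
      have "\<forall>i j. (G'(m := h)) i $ j \<in> K" using G' hK unfolding realizK_def by auto
      then have "G'(m := h) \<in> ?S" using XT unfolding realizK_def by blast
      then have "f (G'(m := h)) = 0" using fS by blast
      then show ?thesis unfolding F_def se by simp
    qed
    have step1: "F (G'(m := u)) = 0" if G': "G' \<in> ?S'" for G' u
      using pf_K_vec[OF infK Fpf] claimA[OF G'] by blast
    have claimB: "F X = 0" if X: "X(m := 0) \<in> ?T'" for X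
    proof -
      define P where "P Y = F (Y(m := X m))" for Y
      have Ppf: "P \<in> polyfun"
      proof -
        have s: "(\<lambda>Y. (Y(m := X m)) i $ j) \<in> polyfun" for i j
          by (cases "i = m") (simp_all add: pf_const pf_var)
        show ?thesis unfolding P_def[abs_def] by (rule pf_subst[OF Fpf s])
      qed
      have "\<forall>Y\<in>?S'. P Y = 0" unfolding P_def using step1 by blast
      then have "\<forall>Y\<in>?T'. P Y = 0" using dense Ppf unfolding zariski_dense_def by blast
      then have "P (X(m := 0)) = 0" using X by blast
      then show ?thesis unfolding P_def by simp
    qed
    obtain u where u: "\<Phi> (G(m := u)) = G m" using Phisurj[OF G] by blast
    have "(G(m := u))(m := 0) = G(m := 0)" by simp
    then have "F (G(m := u)) = 0" using claimB restrict_realiz[OF arr G] by simp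
    moreover have "\<sigma> (G(m := u)) = G" unfolding \<sigma>_def u by simp
    ultimately have "f G * g G = 0" unfolding F_def by simp
    then show "f G = 0" using gG by simp
  qed
  show ?thesis unfolding zariski_dense_def using realizK_sub main by blast
qed

lemma lf_det: "linform a (cr b c) = det3 a b c" by (simp add: det3_exp)

lemma case0:
  assumes K: "subfield_C K" and arr: "arrangement H (Suc m)"
    and dense: "zariski_dense (realizK K m (incidence H m)) (realiz m (incidence H m))"
    and c0: "\<forall>a b. a < m \<longrightarrow> b < m \<longrightarrow> a \<noteq> b \<longrightarrow> det3 (H a) (H b) (H m) \<noteq> 0"
  shows "zariski_dense (realizK K (Suc m) (incidence H (Suc m))) (realiz (Suc m) (incidence H (Suc m)))"
proof (rule step_generic[OF K arr dense, where \<Phi> = "\<lambda>X. X m"])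
  show "(\<lambda>X. X m $ j) \<in> polyfun" for j by (rule pf_var)
  show "\<forall>j. (G'(m := u)) m $ j \<in> K" if "\<forall>j. u $ j \<in> K" for G' u using that by simp
  show "det3 (G' a) (G' b) ((G'(m := u)) m) = 0" if "a < m" "b < m" "a \<noteq> b" "det3 (H a) (H b) (H m) = 0" for G' u a b
    using c0 that by blast
  show "\<exists>u. (G(m := u)) m = G m" for G by (intro exI[of _ "G m"]) simp
qed

lemma case1:
  assumes K: "subfield_C K" and arr: "arrangement H (Suc m)"
    and dense: "zariski_dense (realizK K m (incidence H m)) (realiz m (incidence H m))"
    and ij: "i < m" "j < m" "i \<noteq> j" "det3 (H i) (H j) (H m) = 0"
    and c1: "\<forall>a b. a < m \<longrightarrow> b < m \<longrightarrow> a \<noteq> b \<longrightarrow> det3 (H a) (H b) (H m) = 0 \<longrightarrow>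
              det3 (H a) (H i) (H j) = 0 \<and> det3 (H b) (H i) (H j) = 0"
  shows "zariski_dense (realizK K (Suc m) (incidence H (Suc m))) (realiz (Suc m) (incidence H (Suc m)))"
proof (rule step_generic[OF K arr dense, where \<Phi> = "\<lambda>X. cr (X m) (cr (X i) (X j))"])
  have arr': "arrangement H m" using arr_mono[OF arr] by simp
  have im: "i \<noteq> m" "j \<noteq> m" using ij by auto
  show "(\<lambda>X. cr (X m) (cr (X i) (X j)) $ k) \<in> polyfun" for k
    by (intro pf_cr pf_var)
  show "\<forall>k. cr ((G'(m := u)) m) (cr ((G'(m := u)) i) ((G'(m := u)) j)) $ k \<in> K"
    if G': "G' \<in> realizK K m (incidence H m)" and u: "\<forall>k. u $ k \<in> K" for G' u
  proof -
    have "\<forall>k. G' i $ k \<in> K" "\<forall>k. G' j $ k \<in> K" using G' unfolding realizK_def by auto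
    then have "\<forall>k. cr (G' i) (G' j) $ k \<in> K" using K_cr[OF K] by blast
    then show ?thesis using im u K_cr[OF K] by simp
  qed
  show "det3 (G' a) (G' b) (cr ((G'(m := u)) m) (cr ((G'(m := u)) i) ((G'(m := u)) j))) = 0"
    if G': "G' \<in> realiz m (incidence H m)" and ab: "a < m" "b < m" "a \<noteq> b" "det3 (H a) (H b) (H m) = 0" for G' u a b
  proof -
    let ?p = "cr (G' i) (G' j)"
    have p0: "?p \<noteq> 0" using realiz_cr[OF G' ij(1-3)] .
    have "det3 (H a) (H i) (H j) = 0" "det3 (H b) (H i) (H j) = 0" using c1 ab by auto
    then have "det3 (G' a) (G' i) (G' j) = 0" "det3 (G' b) (G' i) (G' j) = 0"
      using RD[OF arr' G'] ab ij by auto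
    then have 1: "linform (G' a) ?p = 0" "linform (G' b) ?p = 0" by (simp_all add: lf_det)
    have "linform ?p (cr u ?p) = 0" by (rule cr_orth2)
    then have 2: "linform (cr u ?p) ?p = 0" by (simp add: lf_sym[of "cr u ?p"])
    show ?thesis using det3_common[OF p0 1 2] im by simp
  qed
  show "\<exists>u. cr ((G(m := u)) m) (cr ((G(m := u)) i) ((G(m := u)) j)) = G m"
    if G: "G \<in> realiz (Suc m) (incidence H (Suc m))" for G
  proof -
    let ?p = "cr (G i) (G j)"
    have p0: "?p \<noteq> 0" using realiz_cr[OF G] ij by simp
    have "det3 (G i) (G j) (G m) = 0" using RD[OF arr G, of i j m] ij by simp
    then have "linform (G m) ?p = 0" using det3_z(2)[of "G i" "G j" "G m"] by (simp add: lf_det)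
    then obtain v where "cr v ?p = G m" using cr_through[OF p0] by blast
    then show ?thesis using im by (intro exI[of _ v]) simp
  qed
qed

lemma case2:
  assumes K: "subfield_C K" and arr: "arrangement H (Suc m)"
    and dense: "zariski_dense (realizK K m (incidence H m)) (realiz m (incidence H m))"
    and ij: "i < m" "j < m" "i \<noteq> j" "det3 (H i) (H j) (H m) = 0"
    and kl: "k < m" "l < m" "k \<noteq> l" "det3 (H k) (H l) (H m) = 0"
    and rr: "cr (cr (H i) (H j)) (cr (H k) (H l)) \<noteq> 0"
    and c2: "\<forall>a b. a < m \<longrightarrow> b < m \<longrightarrow> a \<noteq> b \<longrightarrow> det3 (H a) (H b) (H m) = 0 \<longrightarrow>
              (det3 (H a) (H i) (H j) = 0 \<and> det3 (H b) (H i) (H j) = 0) \<or>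
              (det3 (H a) (H k) (H l) = 0 \<and> det3 (H b) (H k) (H l) = 0)"
  shows "zariski_dense (realizK K (Suc m) (incidence H (Suc m))) (realiz (Suc m) (incidence H (Suc m)))"
proof (rule step_generic[OF K arr dense, where \<Phi> = "\<lambda>X. (X m $ 1) *s cr (cr (X i) (X j)) (cr (X k) (X l))"])
  have arr': "arrangement H m" using arr_mono[OF arr] by simp
  have im: "i \<noteq> m" "j \<noteq> m" "k \<noteq> m" "l \<noteq> m" using ij kl by auto
  show "(\<lambda>X. ((X m $ 1) *s cr (cr (X i) (X j)) (cr (X k) (X l))) $ q) \<in> polyfun" for q
    by (simp, intro pf_mult pf_var pf_cr)
  show "\<forall>q. ((G'(m := u)) m $ 1 *s cr (cr ((G'(m := u)) i) ((G'(m := u)) j)) (cr ((G'(m := u)) k) ((G'(m := u)) l))) $ q \<in> K"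
    if G': "G' \<in> realizK K m (incidence H m)" and u: "\<forall>q. u $ q \<in> K" for G' u
  proof -
    have "\<forall>q. G' i $ q \<in> K" "\<forall>q. G' j $ q \<in> K" "\<forall>q. G' k $ q \<in> K" "\<forall>q. G' l $ q \<in> K"
      using G' unfolding realizK_def by auto
    then have "\<forall>q. cr (G' i) (G' j) $ q \<in> K" "\<forall>q. cr (G' k) (G' l) $ q \<in> K" using K_cr[OF K] by blast+
    then have "\<forall>q. cr (cr (G' i) (G' j)) (cr (G' k) (G' l)) $ q \<in> K" using K_cr[OF K] by blast
    moreover have "x \<in> K \<Longrightarrow> y \<in> K \<Longrightarrow> x * y \<in> K" for x y using K unfolding subfield_C_def by blast
    ultimately show ?thesis using im u by simp
  qed
  show "det3 (G' a) (G' b) ((G'(m := u)) m $ 1 *s cr (cr ((G'(m := u)) i) ((G'(m := u)) j)) (cr ((G'(m := u)) k) ((G'(m := u)) l))) = 0"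
    if G': "G' \<in> realiz m (incidence H m)" and ab: "a < m" "b < m" "a \<noteq> b" "det3 (H a) (H b) (H m) = 0" for G' u a b
  proof -
    let ?p = "cr (G' i) (G' j)" and ?q = "cr (G' k) (G' l)"
    let ?h = "(u $ 1) *s cr ?p ?q"
    have p0: "?p \<noteq> 0" using realiz_cr[OF G' ij(1-3)] .
    have q0: "?q \<noteq> 0" using realiz_cr[OF G' kl(1-3)] .
    have hp: "linform ?h ?p = 0" by (simp add: lf_scale2 lf_sym[of "cr ?p ?q" ?p] cr_orth1)
    have hq: "linform ?h ?q = 0" by (simp add: lf_scale2 lf_sym[of "cr ?p ?q" ?q] cr_orth2)
    have "det3 (G' a) (G' b) ?h = 0"
    proof (cases "det3 (H a) (H i) (H j) = 0 \<and> det3 (H b) (H i) (H j) = 0")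
      case True
      then have "det3 (G' a) (G' i) (G' j) = 0" "det3 (G' b) (G' i) (G' j) = 0"
        using RD[OF arr' G'] ab ij by auto
      then have 1: "linform (G' a) ?p = 0" "linform (G' b) ?p = 0" by (simp_all add: lf_det)
      show ?thesis using det3_common[OF p0 1 hp] .
    next
      case False
      then have "det3 (H a) (H k) (H l) = 0 \<and> det3 (H b) (H k) (H l) = 0" using c2 ab by blast
      then have "det3 (G' a) (G' k) (G' l) = 0" "det3 (G' b) (G' k) (G' l) = 0"
        using RD[OF arr' G'] ab kl by auto
      then have 1: "linform (G' a) ?q = 0" "linform (G' b) ?q = 0" by (simp_all add: lf_det)
      show ?thesis using det3_common[OF q0 1 hq] .
    qed
    then show ?thesis using im by simp
  qed
  show "\<exists>u. (G(m := u)) m $ 1 *s cr (cr ((G(m := u)) i) ((G(m := u)) j)) (cr ((G(m := u)) k) ((G(m := u)) l)) = G m"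
    if G: "G \<in> realiz (Suc m) (incidence H (Suc m))" for G
  proof -
    let ?p = "cr (G i) (G j)" and ?q = "cr (G k) (G l)"
    have p0: "?p \<noteq> 0" using realiz_cr[OF G] ij by simp
    have q0: "?q \<noteq> 0" using realiz_cr[OF G] kl by simp
    have "det3 (G i) (G j) (G m) = 0" using RD[OF arr G, of i j m] ij by simp
    then have mp: "linform (G m) ?p = 0" using det3_z(2)[of "G i" "G j" "G m"] by (simp add: lf_det)
    have "det3 (G k) (G l) (G m) = 0" using RD[OF arr G, of k l m] kl by simp
    then have mq: "linform (G m) ?q = 0" using det3_z(2)[of "G k" "G l" "G m"] by (simp add: lf_det)
    have pq: "cr ?p ?q \<noteq> 0"
    proof
      assume "cr ?p ?q = 0"
      then obtain s where s: "?p = s *s ?q" using cr_zero_par[OF _ q0] by blast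
      have "linform (G k) ?q = 0" "linform (G l) ?q = 0" by (simp_all add: cr_orth1 cr_orth2)
      then have "linform (G k) ?p = 0" "linform (G l) ?p = 0" unfolding s by (simp_all add: lf_scale)
      then have "det3 (G k) (G i) (G j) = 0" "det3 (G l) (G i) (G j) = 0" by (simp_all add: lf_det)
      then have "det3 (H k) (H i) (H j) = 0" "det3 (H l) (H i) (H j) = 0"
        using RD[OF arr G] ij kl by auto
      then have 1: "linform (H k) (cr (H i) (H j)) = 0" "linform (H l) (cr (H i) (H j)) = 0"
        by (simp_all add: lf_det)
      have kl0: "cr (H k) (H l) \<noteq> 0" using arr_cr[OF arr] kl by simp
      obtain t where "cr (H i) (H j) = t *s cr (H k) (H l)"
        using perp_par[OF _ _ kl0] 1 by (metis lf_sym)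
      then have "cr (cr (H i) (H j)) (cr (H k) (H l)) = t *s cr (cr (H k) (H l)) (cr (H k) (H l))"
        by (simp add: cr_scale)
      also have "\<dots> = 0" by (simp add: vec3_eq)
      finally have "cr (cr (H i) (H j)) (cr (H k) (H l)) = 0" .
      then show False using rr by simp
    qed
    obtain t where t: "G m = t *s cr ?p ?q" using perp_par[OF _ _ pq] mp mq by (metis lf_sym)
    show ?thesis
      by (rule exI[of _ "\<chi> _. t"]) (use im t in simp)
  qed
qed

lemma pp_scale: "c \<noteq> 0 \<Longrightarrow> projpt (c *s y) = projpt y"
proof -
  assume c: "c \<noteq> 0"
  have "range (\<lambda>d. d *s (c *s y)) = range (\<lambda>d. d *s y)"
  proof
    show "range (\<lambda>d. d *s (c *s y)) \<subseteq> range (\<lambda>d. d *s y)"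
    proof
      fix x assume "x \<in> range (\<lambda>d. d *s (c *s y))"
      then obtain d where "x = d *s (c *s y)" by blast
      then have "x = (d * c) *s y" by (simp add: vector_smult_assoc)
      then show "x \<in> range (\<lambda>d. d *s y)" by blast
    qed
    show "range (\<lambda>d. d *s y) \<subseteq> range (\<lambda>d. d *s (c *s y))"
    proof
      fix x assume "x \<in> range (\<lambda>d. d *s y)"
      then obtain d where "x = d *s y" by blast
      then have "x = (d / c) *s (c *s y)" using c by (simp add: vector_smult_assoc)
      then show "x \<in> range (\<lambda>d. d *s (c *s y))" by blast
    qed
  qed
  then show ?thesis unfolding projpt_def .
qed

lemma pp_eq: "projpt x = projpt y \<Longrightarrow> \<exists>d. x = d *s y"
proof -
  assume e: "projpt x = projpt y"
  have "x \<in> projpt x" unfolding projpt_def by (rule range_eqI[of _ _ 1]) simp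
  then have "x \<in> projpt y" using e by simp
  then show ?thesis unfolding projpt_def by blast
qed

lemma two_others:
  assumes "finite A" "3 \<le> card A" "m \<in> A"
  shows "\<exists>a b. a \<in> A \<and> b \<in> A \<and> a \<noteq> b \<and> a \<noteq> m \<and> b \<noteq> m"
proof -
  have c1: "2 \<le> card (A - {m})" using assms by (simp add: card_Diff_singleton)
  then have "A - {m} \<noteq> {}" by (intro notI) simp
  then obtain a where a: "a \<in> A - {m}" by blast
  have "card (A - {m} - {a}) \<ge> 1" using c1 a assms(1) by (simp add: card_Diff_singleton)
  then have "A - {m} - {a} \<noteq> {}" by (intro notI) simp
  then obtain b where "b \<in> A - {m} - {a}" by blast
  then show ?thesis using a by blast
qed

lemma three_card:
  assumes "finite P" "card P \<le> 2" "x \<in> P" "y \<in> P" "z \<in> P" "x \<noteq> y"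
  shows "z = x \<or> z = y"
proof (rule ccontr)
  assume "\<not> (z = x \<or> z = y)"
  then have "card {x,y,z} = 3" using assms(6) by auto
  moreover have "card {x,y,z} \<le> card P" using assms by (intro card_mono) auto
  ultimately show False using assms(2) by simp
qed

lemma cases_card:
  assumes arr: "arrangement H (Suc m)" and cd: "card (ptsOn (H m) \<inter> multpts H (Suc m)) \<le> 2"
  shows "(\<forall>a b. a < m \<longrightarrow> b < m \<longrightarrow> a \<noteq> b \<longrightarrow> det3 (H a) (H b) (H m) \<noteq> 0) \<or>
    (\<exists>i j. i < m \<and> j < m \<and> i \<noteq> j \<and> det3 (H i) (H j) (H m) = 0 \<and>
       (\<forall>a b. a < m \<longrightarrow> b < m \<longrightarrow> a \<noteq> b \<longrightarrow> det3 (H a) (H b) (H m) = 0 \<longrightarrow>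
              det3 (H a) (H i) (H j) = 0 \<and> det3 (H b) (H i) (H j) = 0)) \<or>
    (\<exists>i j k l. i < m \<and> j < m \<and> i \<noteq> j \<and> det3 (H i) (H j) (H m) = 0 \<and>
       k < m \<and> l < m \<and> k \<noteq> l \<and> det3 (H k) (H l) (H m) = 0 \<and>
       cr (cr (H i) (H j)) (cr (H k) (H l)) \<noteq> 0 \<and>
       (\<forall>a b. a < m \<longrightarrow> b < m \<longrightarrow> a \<noteq> b \<longrightarrow> det3 (H a) (H b) (H m) = 0 \<longrightarrow>
              (det3 (H a) (H i) (H j) = 0 \<and> det3 (H b) (H i) (H j) = 0) \<or>
              (det3 (H a) (H k) (H l) = 0 \<and> det3 (H b) (H k) (H l) = 0)))"
proof -
  define P where "P = ptsOn (H m) \<inter> multpts H (Suc m)"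
  define W where "W = {cr (H a) (H b) | a b. a < m \<and> b < m \<and> a \<noteq> b \<and> det3 (H a) (H b) (H m) = 0}"
  have Wfin: "finite W"
  proof -
    have "W \<subseteq> (\<lambda>(a,b). cr (H a) (H b)) ` ({..<m} \<times> {..<m})" unfolding W_def by auto
    then show ?thesis by (rule finite_subset) simp
  qed
  have WP: "projpt w \<in> P" if "w \<in> W" for w
  proof -
    obtain a b where ab: "w = cr (H a) (H b)" "a < m" "b < m" "a \<noteq> b" "det3 (H a) (H b) (H m) = 0"
      using \<open>w \<in> W\<close> unfolding W_def by blast
    have w0: "w \<noteq> 0" using arr_cr[OF arr, of a b] ab by simp
    have la: "linform (H a) w = 0" "linform (H b) w = 0" using ab(1) by (simp_all add: cr_orth1 cr_orth2)
    have lm: "linform (H m) w = 0" using ab det3_z(2)[of "H a" "H b" "H m"] by (simp add: lf_det)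
    have "{a,b,m} \<subseteq> {i. i < Suc m \<and> linform (H i) w = 0}" using ab la lm by auto
    then have "card {a,b,m} \<le> card {i. i < Suc m \<and> linform (H i) w = 0}" by (rule card_mono[rotated]) simp
    moreover have "card {a,b,m} = 3" using ab by auto
    ultimately have "3 \<le> card {i. i < Suc m \<and> linform (H i) w = 0}" by simp
    then show ?thesis unfolding P_def ptsOn_def multpts_def using w0 lm by blast
  qed
  have PW: "P \<subseteq> projpt ` W"
  proof
    fix Z assume "Z \<in> P"
    then obtain p p' where p: "Z = projpt p" "p \<noteq> 0" "linform (H m) p = 0"
      and p': "Z = projpt p'" "p' \<noteq> 0" "3 \<le> card {i. i < Suc m \<and> linform (H i) p' = 0}"
      unfolding P_def ptsOn_def multpts_def by blast
    obtain d where d: "p = d *s p'" using pp_eq p(1) p'(1) by metis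
    then have "d \<noteq> 0" using p(2) by auto
    then have mp': "linform (H m) p' = 0" using p(3) d by (simp add: lf_scale)
    obtain a b where ab: "a \<in> {i. i < Suc m \<and> linform (H i) p' = 0}" "b \<in> {i. i < Suc m \<and> linform (H i) p' = 0}"
      "a \<noteq> b" "a \<noteq> m" "b \<noteq> m"
      using two_others[OF _ p'(3), of m] mp' by auto
    then have ab': "a < m" "b < m" "linform (H a) p' = 0" "linform (H b) p' = 0" by auto
    have c0: "cr (H a) (H b) \<noteq> 0" using arr_cr[OF arr, of a b] ab' ab(3) by simp
    obtain t where t: "p' = t *s cr (H a) (H b)" using perp_par[OF ab'(3,4) c0] by blast
    then have t0: "t \<noteq> 0" using p'(2) by auto
    have "linform (H m) (cr (H a) (H b)) = 0" using mp' t t0 by (simp add: lf_scale)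
    then have "det3 (H a) (H b) (H m) = 0" using det3_z(2)[of "H a" "H b" "H m"] by (simp add: lf_det)
    then have "cr (H a) (H b) \<in> W" unfolding W_def using ab' ab(3) by blast
    moreover have "Z = projpt (cr (H a) (H b))" using p'(1) t pp_scale[OF t0] by simp
    ultimately show "Z \<in> projpt ` W" by blast
  qed
  have Pfin: "finite P" using PW Wfin finite_subset by blast
  have cP: "card P \<le> 2" using cd unfolding P_def .
  have Wmem: "cr (H a) (H b) \<in> W" if "a < m" "b < m" "a \<noteq> b" "det3 (H a) (H b) (H m) = 0" for a b
    unfolding W_def using that by blast
  have perp_of: "det3 (H a) (H i) (H j) = 0 \<and> det3 (H b) (H i) (H j) = 0"
    if e: "projpt (cr (H a) (H b)) = projpt (cr (H i) (H j))" for a b i j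
  proof -
    obtain d where "cr (H i) (H j) = d *s cr (H a) (H b)" using pp_eq e[symmetric] by blast
    then show ?thesis by (simp add: lf_det[symmetric] lf_scale cr_orth1 cr_orth2)
  qed
  show ?thesis
  proof (cases "W = {}")
    case True
    then show ?thesis using Wmem by blast
  next
    case False
    then obtain i j where ij: "i < m" "j < m" "i \<noteq> j" "det3 (H i) (H j) (H m) = 0"
      unfolding W_def by blast
    let ?w0 = "cr (H i) (H j)"
    show ?thesis
    proof (cases "\<forall>w\<in>W. projpt w = projpt ?w0")
      case True
      then have "\<forall>a b. a < m \<longrightarrow> b < m \<longrightarrow> a \<noteq> b \<longrightarrow> det3 (H a) (H b) (H m) = 0 \<longrightarrow>
              det3 (H a) (H i) (H j) = 0 \<and> det3 (H b) (H i) (H j) = 0"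
        using Wmem perp_of by blast
      then show ?thesis using ij by blast
    next
      case False
      then obtain w1 where w1: "w1 \<in> W" "projpt w1 \<noteq> projpt ?w0" by blast
      then obtain k l where kl: "w1 = cr (H k) (H l)" "k < m" "l < m" "k \<noteq> l" "det3 (H k) (H l) (H m) = 0"
        unfolding W_def by blast
      have w0W: "?w0 \<in> W" using Wmem ij by blast
      have two: "projpt w = projpt ?w0 \<or> projpt w = projpt w1" if "w \<in> W" for w
        using three_card[OF Pfin cP WP[OF w0W] WP[OF w1(1)] WP[OF that]] w1(2) by auto
      have rr: "cr ?w0 w1 \<noteq> 0"
      proof
        assume "cr ?w0 w1 = 0"
        moreover have "w1 \<noteq> 0" using arr_cr[OF arr, of k l] kl by simp
        ultimately obtain s where s: "?w0 = s *s w1" using cr_zero_par by blast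
        have "?w0 \<noteq> 0" using arr_cr[OF arr, of i j] ij by simp
        then have "s \<noteq> 0" using s by auto
        then have "projpt ?w0 = projpt w1" using s pp_scale by simp
        then show False using w1(2) by simp
      qed
      have "\<forall>a b. a < m \<longrightarrow> b < m \<longrightarrow> a \<noteq> b \<longrightarrow> det3 (H a) (H b) (H m) = 0 \<longrightarrow>
              (det3 (H a) (H i) (H j) = 0 \<and> det3 (H b) (H i) (H j) = 0) \<or>
              (det3 (H a) (H k) (H l) = 0 \<and> det3 (H b) (H k) (H l) = 0)"
      proof (intro allI impI)
        fix a b assume ab: "a < m" "b < m" "a \<noteq> b" "det3 (H a) (H b) (H m) = 0"
        from two[OF Wmem[OF ab]] show "(det3 (H a) (H i) (H j) = 0 \<and> det3 (H b) (H i) (H j) = 0) \<or>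
              (det3 (H a) (H k) (H l) = 0 \<and> det3 (H b) (H k) (H l) = 0)"
          using perp_of kl(1) by blast
      qed
      then show ?thesis using ij kl rr by blast
    qed
  qed
qed

lemma part1:
  assumes K: "subfield_C K" and n1: "1 \<le> n" and arr: "arrangement H n"
    and cd: "card (ptsOn (H (n - 1)) \<inter> multpts H n) \<le> 2"
    and dense: "zariski_dense (realizK K (n - 1) (incidence H (n - 1))) (realiz (n - 1) (incidence H (n - 1)))"
  shows "zariski_dense (realizK K n (incidence H n)) (realiz n (incidence H n)) \<and> realizK K n (incidence H n) \<noteq> {}"
proof -
  obtain m where n: "n = Suc m" using n1 by (cases n) auto
  have arr': "arrangement H (Suc m)" using arr n by simp
  have cd': "card (ptsOn (H m) \<inter> multpts H (Suc m)) \<le> 2" using cd n by simp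
  have dense': "zariski_dense (realizK K m (incidence H m)) (realiz m (incidence H m))" using dense n by simp
  have D: "zariski_dense (realizK K (Suc m) (incidence H (Suc m))) (realiz (Suc m) (incidence H (Suc m)))"
    using cases_card[OF arr' cd']
  proof (elim disjE exE conjE)
    assume "\<forall>a b. a < m \<longrightarrow> b < m \<longrightarrow> a \<noteq> b \<longrightarrow> det3 (H a) (H b) (H m) \<noteq> 0"
    then show ?thesis by (rule case0[OF K arr' dense'])
  next
    fix i j assume "i < m" "j < m" "i \<noteq> j" "det3 (H i) (H j) (H m) = 0"
      "\<forall>a b. a < m \<longrightarrow> b < m \<longrightarrow> a \<noteq> b \<longrightarrow> det3 (H a) (H b) (H m) = 0 \<longrightarrow>
              det3 (H a) (H i) (H j) = 0 \<and> det3 (H b) (H i) (H j) = 0"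
    then show ?thesis by (rule case1[OF K arr' dense'])
  next
    fix i j k l assume "i < m" "j < m" "i \<noteq> j" "det3 (H i) (H j) (H m) = 0"
       "k < m" "l < m" "k \<noteq> l" "det3 (H k) (H l) (H m) = 0"
       "cr (cr (H i) (H j)) (cr (H k) (H l)) \<noteq> 0"
       "\<forall>a b. a < m \<longrightarrow> b < m \<longrightarrow> a \<noteq> b \<longrightarrow> det3 (H a) (H b) (H m) = 0 \<longrightarrow>
              (det3 (H a) (H i) (H j) = 0 \<and> det3 (H b) (H i) (H j) = 0) \<or>
              (det3 (H a) (H k) (H l) = 0 \<and> det3 (H b) (H k) (H l) = 0)"
    then show ?thesis by (rule case2[OF K arr' dense'])
  qed
  have "realiz (Suc m) (incidence H (Suc m)) \<noteq> {}" using trunc_realiz[OF arr'] by blast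
  then show ?thesis using D dense_nonempty n by simp
qed

lemma subfield_Q: "subfield_C \<rat>"
  unfolding subfield_C_def by auto

lemma part2:
  assumes arr: "arrangement H n" and ic: "ind_conn H n"
  shows "realizK \<rat> n (incidence H n) \<noteq> {}"
proof -
  obtain s where s: "bij_betw s {..<n} {..<n}"
    and sc: "\<forall>t<n. card (ptsOn (H (s t)) \<inter> multpts (H \<circ> s) (Suc t)) \<le> 2"
    using ic unfolding ind_conn_def by blast
  define H' where "H' = H \<circ> s"
  have sin: "s i < n" if "i < n" for i using bij_betw_apply[OF s] that by auto
  have sinj: "s i \<noteq> s j" if "i < n" "j < n" "i \<noteq> j" for i j
    using bij_betw_imp_inj_on[OF s] that by (auto simp: inj_on_def)
  have arrH': "arrangement H' n"
    using arr sin sinj unfolding arrangement_def H'_def by auto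
  have dense: "zariski_dense (realizK \<rat> t (incidence H' t)) (realiz t (incidence H' t))" if "t \<le> n" for t
    using that
  proof (induction t)
    case 0
    have "realiz 0 (incidence H' 0) \<subseteq> realizK \<rat> 0 (incidence H' 0)"
      unfolding realizK_def realiz_def by auto
    then have "realizK \<rat> 0 (incidence H' 0) = realiz 0 (incidence H' 0)" using realizK_sub by blast
    then show ?case unfolding zariski_dense_def by simp
  next
    case (Suc t)
    then have tn: "t < n" by simp
    have a: "arrangement H' (Suc t)" using arr_mono[OF arrH'] Suc.prems by simp
    have c: "card (ptsOn (H' (Suc t - 1)) \<inter> multpts H' (Suc t)) \<le> 2"
      using sc tn unfolding H'_def by simp
    have d: "zariski_dense (realizK \<rat> (Suc t - 1) (incidence H' (Suc t - 1))) (realiz (Suc t - 1) (incidence H' (Suc t - 1)))"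
      using Suc by simp
    show ?case using part1[OF subfield_Q _ a c d] by simp
  qed
  have "realizK \<rat> n (incidence H' n) \<noteq> {}"
    using dense_nonempty[OF dense[OF order_refl]] trunc_realiz[OF arrH'] by blast
  then obtain G where G: "G \<in> realizK \<rat> n (incidence H' n)" by blast
  then have GT: "G \<in> realiz n (incidence H' n)" using realizK_sub by blast
  define r where "r = inv_into {..<n} s"
  have rb: "bij_betw r {..<n} {..<n}" unfolding r_def using bij_betw_inv_into[OF s] .
  have rin: "r i < n" if "i < n" for i using bij_betw_apply[OF rb] that by auto
  have rinj: "r i \<noteq> r j" if "i < n" "j < n" "i \<noteq> j" for i j
    using bij_betw_imp_inj_on[OF rb] that by (auto simp: inj_on_def)
  have sr: "s (r i) = i" if "i < n" for i
    unfolding r_def using bij_betw_inv_into_right[OF s] that by auto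
  define G2 where "G2 i = (if i < n then G (r i) else 0)" for i
  have z: "\<forall>i. n \<le> i \<longrightarrow> G2 i = 0" unfolding G2_def by auto
  have nz: "\<forall>i<n. G2 i \<noteq> 0" unfolding G2_def using GT rin unfolding realiz_def by auto
  have np: "\<forall>i<n. \<forall>j<n. i \<noteq> j \<longrightarrow> \<not> proj_eq (G2 i) (G2 j)"
    unfolding G2_def using GT rin rinj unfolding realiz_def by auto
  have dd: "det3 (G2 i) (G2 j) (G2 k) = 0 \<longleftrightarrow> {i,j,k} \<in> incidence H n"
    if "i < n" "j < n" "k < n" "i \<noteq> j" "i \<noteq> k" "j \<noteq> k" for i j k
  proof -
    have "det3 (G2 i) (G2 j) (G2 k) = 0 \<longleftrightarrow> det3 (H' (r i)) (H' (r j)) (H' (r k)) = 0"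
      unfolding G2_def using RD[OF arrH' GT] rin that by simp
    also have "\<dots> \<longleftrightarrow> det3 (H i) (H j) (H k) = 0" unfolding H'_def using sr that by simp
    also have "\<dots> \<longleftrightarrow> {i,j,k} \<in> incidence H n" using incid_det[OF arr that] by simp
    finally show ?thesis .
  qed
  have "G2 \<in> realiz n (incidence H n)" unfolding realiz_def using z nz np dd by blast
  moreover have "\<forall>i j. G2 i $ j \<in> \<rat>" unfolding G2_def using G unfolding realizK_def by auto
  ultimately show ?thesis unfolding realizK_def by blast
qed

theorem mainTheorem5:
  shows "(\<forall>(K::complex set) (H::nat \<Rightarrow> cvec) n.
            subfield_C K \<and> 1 \<le> n \<and> arrangement H n \<and>
            card (ptsOn (H (n - 1)) \<inter> multpts H n) \<le> 2 \<and>
            zariski_dense (realizK K (n - 1) (incidence H (n - 1)))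
                          (realiz (n - 1) (incidence H (n - 1)))
          \<longrightarrow> zariski_dense (realizK K n (incidence H n)) (realiz n (incidence H n)) \<and>
              realizK K n (incidence H n) \<noteq> {})
       \<and> (\<forall>(H::nat \<Rightarrow> cvec) n. arrangement H n \<and> ind_conn H n
            \<longrightarrow> realizK \<rat> n (incidence H n) \<noteq> {})"
  using part1 part2 by blast

end
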